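(* There is no $3$-dimensional Hopf superalgebra $A=A_0\oplus A_1$ over $\mathbb{K}$ with $A_1\neq 0$.
   Context: $\mathbb{K}$ is an algebraically closed field of characteristic $0$. A superalgebra is an associative unital $\mathbb{K}$-algebra $A=A_0\oplus A_1$ with a $\mathbb{Z}/2\mathbb{Z}$-grading such that $A_iA_j\subseteq A_{i+j}$ and $1\in A_0$; $|a|$ denotes the degree. $A\otimes A$ has product $(a\otimes b)(c\otimes d)=(-1)^{|b||c|}ac\otimes bd$. A superbialgebra is a superalgebra with even linear maps $\Delta:A\to A\otimes A$, $\varepsilon:A\to\mathbb{K}$ ($\mathbb{K}$ in degree $0$) which are coassociative and counital and are unital algebra homomorphisms. A Hopf superalgebra is a superbialgebra with an even linear map $S:A\to A$ satisfying $\mu\circ(S\otimes\mathrm{id})\circ\Delta=\mu\circ(\mathrm{id}\otimes S)\circ\Delta=\eta\circ\varepsilon$, where $\mu$ is the product and $\eta(\lambda)=\lambda1$. *)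

theory Defs
  imports "HOL-Computational_Algebra.Polynomial"
begin

definition alg_closed_field :: "'k::field itself \<Rightarrow> bool" where
  "alg_closed_field _ \<longleftrightarrow> (\<forall>p::'k poly. degree p > 0 \<longrightarrow> (\<exists>x. poly p x = 0))"

text \<open>A finite-dimensional Hopf superalgebra of dimension n, described by structure
constants with respect to a homogeneous basis e_0,...,e_(n-1) (every Z/2-graded
finite-dimensional space has one).  deg i in {0,1} is the parity of e_i.
  e_i e_j = sum_k m i j k e_k,      1 = sum_k u k e_k,
  Delta e_i = sum_(j,k) d i j k e_j (x) e_k,   eps e_i = c i,   S e_i = sum_j s i j e_j.
The product on A (x) A is (a(x)b)(c(x)d) = (-1)^(|b||c|) ac (x) bd.\<close>
definition hopf_superalgebra_sc ::
  "nat \<Rightarrow> (nat \<Rightarrow> nat) \<Rightarrow> (nat \<Rightarrow> nat \<Rightarrow> nat \<Rightarrow> 'k::field) \<Rightarrow> (nat \<Rightarrow> 'k)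
   \<Rightarrow> (nat \<Rightarrow> nat \<Rightarrow> nat \<Rightarrow> 'k) \<Rightarrow> (nat \<Rightarrow> 'k) \<Rightarrow> (nat \<Rightarrow> nat \<Rightarrow> 'k) \<Rightarrow> bool" where
  "hopf_superalgebra_sc n deg m u d c s \<longleftrightarrow>
     \<comment> \<open>grading and evenness of all structure maps\<close>
     (\<forall>i<n. deg i < 2) \<and>
     (\<forall>i<n. \<forall>j<n. \<forall>k<n. m i j k \<noteq> 0 \<longrightarrow> deg k = (deg i + deg j) mod 2) \<and>
     (\<forall>k<n. u k \<noteq> 0 \<longrightarrow> deg k = 0) \<and>
     (\<forall>i<n. \<forall>j<n. \<forall>k<n. d i j k \<noteq> 0 \<longrightarrow> deg i = (deg j + deg k) mod 2) \<and>
     (\<forall>i<n. c i \<noteq> 0 \<longrightarrow> deg i = 0) \<and>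
     (\<forall>i<n. \<forall>j<n. s i j \<noteq> 0 \<longrightarrow> deg i = deg j) \<and>
     \<comment> \<open>associativity\<close>
     (\<forall>i<n. \<forall>j<n. \<forall>k<n. \<forall>r<n.
        (\<Sum>l<n. m i j l * m l k r) = (\<Sum>l<n. m j k l * m i l r)) \<and>
     \<comment> \<open>unit\<close>
     (\<forall>j<n. \<forall>k<n. (\<Sum>l<n. u l * m l j k) = (if j = k then 1 else 0)) \<and>
     (\<forall>j<n. \<forall>k<n. (\<Sum>l<n. u l * m j l k) = (if j = k then 1 else 0)) \<and>
     \<comment> \<open>coassociativity\<close>
     (\<forall>i<n. \<forall>a<n. \<forall>b<n. \<forall>r<n.
        (\<Sum>l<n. d i l r * d l a b) = (\<Sum>l<n. d i a l * d l b r)) \<and>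
     \<comment> \<open>counit\<close>
     (\<forall>i<n. \<forall>k<n. (\<Sum>j<n. d i j k * c j) = (if i = k then 1 else 0)) \<and>
     (\<forall>i<n. \<forall>j<n. (\<Sum>k<n. d i j k * c k) = (if i = j then 1 else 0)) \<and>
     \<comment> \<open>Delta is a unital algebra homomorphism A -> A (x) A (super tensor product)\<close>
     (\<forall>i<n. \<forall>j<n. \<forall>a<n. \<forall>b<n.
        (\<Sum>k<n. m i j k * d k a b) =
        (\<Sum>p<n. \<Sum>q<n. \<Sum>r<n. \<Sum>t<n.
            (-1) ^ (deg q * deg r) * d i p q * d j r t * m p r a * m q t b)) \<and>
     (\<forall>a<n. \<forall>b<n. (\<Sum>k<n. u k * d k a b) = u a * u b) \<and>
     \<comment> \<open>epsilon is a unital algebra homomorphism\<close>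
     (\<forall>i<n. \<forall>j<n. (\<Sum>k<n. m i j k * c k) = c i * c j) \<and>
     (\<Sum>k<n. u k * c k) = 1 \<and>
     \<comment> \<open>antipode axioms\<close>
     (\<forall>i<n. \<forall>k<n. (\<Sum>p<n. \<Sum>q<n. \<Sum>r<n. d i p q * s p r * m r q k) = c i * u k) \<and>
     (\<forall>i<n. \<forall>k<n. (\<Sum>p<n. \<Sum>q<n. \<Sum>r<n. d i p q * s q r * m p r k) = c i * u k)"

end

theory Submission
  imports Defs
begin


lemma mv3:
  "(\<Sum>x<(n::nat). \<Sum>a<n. \<Sum>b<n. f x a b) = (\<Sum>a<n. \<Sum>b<n. \<Sum>x<n. (f x a b :: 'a::comm_monoid_add))"
  by (rule trans[OF sum.swap], rule sum.cong[OF refl], rule sum.swap)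

lemma mv4:
  "(\<Sum>x<(n::nat). \<Sum>a<n. \<Sum>b<n. \<Sum>e<n. f x a b e) = (\<Sum>a<n. \<Sum>b<n. \<Sum>e<n. \<Sum>x<n. (f x a b e :: 'a::comm_monoid_add))"
  by (rule trans[OF sum.swap], rule sum.cong[OF refl], rule mv3)

lemma mv5:
  "(\<Sum>x<(n::nat). \<Sum>a<n. \<Sum>b<n. \<Sum>e<n. \<Sum>g<n. f x a b e g) = (\<Sum>a<n. \<Sum>b<n. \<Sum>e<n. \<Sum>g<n. \<Sum>x<n. (f x a b e g :: 'a::comm_monoid_add))"
  by (rule trans[OF sum.swap], rule sum.cong[OF refl], rule mv4)

lemma sum_delta_mul: "a < (n::nat) \<Longrightarrow> (\<Sum>q<n. (if a = q then 1 else 0) * (f q::'a::comm_ring_1)) = f a"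
proof -
  assume "a < n"
  have "(\<Sum>q<n. (if a = q then 1 else 0) * f q) = (\<Sum>q<n. if a = q then f q else 0)"
    by (intro sum.cong refl) auto
  then show ?thesis using \<open>a < n\<close> by simp
qed

lemma sum_nz: "(\<Sum>x<(n::nat). f x) \<noteq> (0::'a::comm_monoid_add) \<Longrightarrow> \<exists>x<n. f x \<noteq> 0"
  by (meson lessThan_iff sum.neutral)

locale cb =
  fixes n :: nat and deg deg' :: "nat \<Rightarrow> nat"
    and m d :: "nat \<Rightarrow> nat \<Rightarrow> nat \<Rightarrow> 'k::field"
    and u c :: "nat \<Rightarrow> 'k" and s P Q :: "nat \<Rightarrow> nat \<Rightarrow> 'k"
  assumes H: "hopf_superalgebra_sc n deg m u d c s"
    and PQ: "\<And>a b. a < n \<Longrightarrow> b < n \<Longrightarrow> (\<Sum>l<n. P a l * Q l b) = (if a = b then 1 else 0)"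
    and QP: "\<And>a b. a < n \<Longrightarrow> b < n \<Longrightarrow> (\<Sum>l<n. Q a l * P l b) = (if a = b then 1 else 0)"
    and gP: "\<And>a p. a < n \<Longrightarrow> p < n \<Longrightarrow> P a p \<noteq> 0 \<Longrightarrow> deg' a = deg p"
    and gQ: "\<And>p a. p < n \<Longrightarrow> a < n \<Longrightarrow> Q p a \<noteq> 0 \<Longrightarrow> deg' a = deg p"
    and dg': "\<And>a. a < n \<Longrightarrow> deg' a < 2"
begin

lemmas HH = H[unfolded hopf_superalgebra_sc_def]
lemmas o_deg = HH[THEN conjunct1, rule_format]
lemmas o_gm = HH[THEN conjunct2, THEN conjunct1, rule_format]
lemmas o_gu = HH[THEN conjunct2, THEN conjunct2, THEN conjunct1, rule_format]
lemmas o_gd = HH[THEN conjunct2, THEN conjunct2, THEN conjunct2, THEN conjunct1, rule_format]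
lemmas o_gc = HH[THEN conjunct2, THEN conjunct2, THEN conjunct2, THEN conjunct2, THEN conjunct1, rule_format]
lemmas o_gs = HH[THEN conjunct2, THEN conjunct2, THEN conjunct2, THEN conjunct2, THEN conjunct2, THEN conjunct1, rule_format]
lemmas o_assoc = HH[THEN conjunct2, THEN conjunct2, THEN conjunct2, THEN conjunct2, THEN conjunct2, THEN conjunct2, THEN conjunct1, rule_format]
lemmas o_unitL = HH[THEN conjunct2, THEN conjunct2, THEN conjunct2, THEN conjunct2, THEN conjunct2, THEN conjunct2, THEN conjunct2, THEN conjunct1, rule_format]
lemmas o_unitR = HH[THEN conjunct2, THEN conjunct2, THEN conjunct2, THEN conjunct2, THEN conjunct2, THEN conjunct2, THEN conjunct2, THEN conjunct2, THEN conjunct1, rule_format]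
lemmas o_coassoc = HH[THEN conjunct2, THEN conjunct2, THEN conjunct2, THEN conjunct2, THEN conjunct2, THEN conjunct2, THEN conjunct2, THEN conjunct2, THEN conjunct2, THEN conjunct1, rule_format]
lemmas o_counitL = HH[THEN conjunct2, THEN conjunct2, THEN conjunct2, THEN conjunct2, THEN conjunct2, THEN conjunct2, THEN conjunct2, THEN conjunct2, THEN conjunct2, THEN conjunct2, THEN conjunct1, rule_format]
lemmas o_counitR = HH[THEN conjunct2, THEN conjunct2, THEN conjunct2, THEN conjunct2, THEN conjunct2, THEN conjunct2, THEN conjunct2, THEN conjunct2, THEN conjunct2, THEN conjunct2, THEN conjunct2, THEN conjunct1, rule_format]
lemmas o_dhom = HH[THEN conjunct2, THEN conjunct2, THEN conjunct2, THEN conjunct2, THEN conjunct2, THEN conjunct2, THEN conjunct2, THEN conjunct2, THEN conjunct2, THEN conjunct2, THEN conjunct2, THEN conjunct2, THEN conjunct1, rule_format]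
lemmas o_dunit = HH[THEN conjunct2, THEN conjunct2, THEN conjunct2, THEN conjunct2, THEN conjunct2, THEN conjunct2, THEN conjunct2, THEN conjunct2, THEN conjunct2, THEN conjunct2, THEN conjunct2, THEN conjunct2, THEN conjunct2, THEN conjunct1, rule_format]
lemmas o_ehom = HH[THEN conjunct2, THEN conjunct2, THEN conjunct2, THEN conjunct2, THEN conjunct2, THEN conjunct2, THEN conjunct2, THEN conjunct2, THEN conjunct2, THEN conjunct2, THEN conjunct2, THEN conjunct2, THEN conjunct2, THEN conjunct2, THEN conjunct1, rule_format]
lemmas o_eu = HH[THEN conjunct2, THEN conjunct2, THEN conjunct2, THEN conjunct2, THEN conjunct2, THEN conjunct2, THEN conjunct2, THEN conjunct2, THEN conjunct2, THEN conjunct2, THEN conjunct2, THEN conjunct2, THEN conjunct2, THEN conjunct2, THEN conjunct2, THEN conjunct1, rule_format]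
lemmas o_antL = HH[THEN conjunct2, THEN conjunct2, THEN conjunct2, THEN conjunct2, THEN conjunct2, THEN conjunct2, THEN conjunct2, THEN conjunct2, THEN conjunct2, THEN conjunct2, THEN conjunct2, THEN conjunct2, THEN conjunct2, THEN conjunct2, THEN conjunct2, THEN conjunct2, THEN conjunct1, rule_format]
lemmas o_antR = HH[THEN conjunct2, THEN conjunct2, THEN conjunct2, THEN conjunct2, THEN conjunct2, THEN conjunct2, THEN conjunct2, THEN conjunct2, THEN conjunct2, THEN conjunct2, THEN conjunct2, THEN conjunct2, THEN conjunct2, THEN conjunct2, THEN conjunct2, THEN conjunct2, THEN conjunct2, rule_format]

definition mul :: "(nat \<Rightarrow> 'k) \<Rightarrow> (nat \<Rightarrow> 'k) \<Rightarrow> nat \<Rightarrow> 'k" where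
  "mul v w r = (\<Sum>p<n. \<Sum>q<n. v p * w q * m p q r)"
definition crd :: "(nat \<Rightarrow> 'k) \<Rightarrow> nat \<Rightarrow> 'k" where
  "crd v r = (\<Sum>x<n. v x * Q x r)"
definition crd2 :: "(nat \<Rightarrow> nat \<Rightarrow> 'k) \<Rightarrow> nat \<Rightarrow> nat \<Rightarrow> 'k" where
  "crd2 T a b = (\<Sum>x<n. \<Sum>y<n. T x y * Q x a * Q y b)"
definition cop :: "(nat \<Rightarrow> 'k) \<Rightarrow> nat \<Rightarrow> nat \<Rightarrow> 'k" where
  "cop v x y = (\<Sum>i<n. v i * d i x y)"
definition eps :: "(nat \<Rightarrow> 'k) \<Rightarrow> 'k" where
  "eps v = (\<Sum>i<n. v i * c i)"
definition ant :: "(nat \<Rightarrow> 'k) \<Rightarrow> nat \<Rightarrow> 'k" where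
  "ant v r = (\<Sum>p<n. v p * s p r)"
definition tmul :: "(nat \<Rightarrow> nat \<Rightarrow> 'k) \<Rightarrow> (nat \<Rightarrow> nat \<Rightarrow> 'k) \<Rightarrow> nat \<Rightarrow> nat \<Rightarrow> 'k" where
  "tmul A B z w = (\<Sum>x<n. \<Sum>y<n. \<Sum>x'<n. \<Sum>y'<n.
      (-1) ^ (deg y * deg x') * A x y * B x' y' * m x x' z * m y y' w)"

lemma mul_sum1: "mul (\<lambda>p. \<Sum>l<n. f l p) w r = (\<Sum>l<n. mul (f l) w r)"
  unfolding mul_def by (simp add: sum_distrib_left sum_distrib_right mult_ac, rule mv3[symmetric])
lemma mul_scal1: "mul (\<lambda>p. k * f p) w r = k * mul f w r"
  unfolding mul_def by (simp add: sum_distrib_left mult_ac)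
lemma mul_sum2: "mul v (\<lambda>q. \<Sum>l<n. f l q) r = (\<Sum>l<n. mul v (f l) r)"
  unfolding mul_def by (simp add: sum_distrib_left sum_distrib_right mult_ac, rule mv3[symmetric])
lemma mul_scal2: "mul v (\<lambda>p. k * f p) r = k * mul v f r"
  unfolding mul_def by (simp add: sum_distrib_left mult_ac)
lemma crd_sum: "crd (\<lambda>x. \<Sum>l<n. f l x) r = (\<Sum>l<n. crd (f l) r)"
  unfolding crd_def by (simp add: sum_distrib_left sum_distrib_right, rule sum.swap)
lemma crd_scal: "crd (\<lambda>x. k * f x) r = k * crd f r"
  unfolding crd_def by (simp add: sum_distrib_left mult_ac)
lemma eps_sum: "eps (\<lambda>x. \<Sum>l<n. f l x) = (\<Sum>l<n. eps (f l))"
  unfolding eps_def by (simp add: sum_distrib_left sum_distrib_right, rule sum.swap)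
lemma eps_scal: "eps (\<lambda>x. k * f x) = k * eps f"
  unfolding eps_def by (simp add: sum_distrib_left mult_ac)
lemma ant_sum: "ant (\<lambda>x. \<Sum>l<n. f l x) r = (\<Sum>l<n. ant (f l) r)"
  unfolding ant_def by (simp add: sum_distrib_left sum_distrib_right, rule sum.swap)
lemma ant_scal: "ant (\<lambda>x. k * f x) r = k * ant f r"
  unfolding ant_def by (simp add: sum_distrib_left mult_ac)
lemma cop_sum: "cop (\<lambda>x. \<Sum>l<n. f l x) a b = (\<Sum>l<n. cop (f l) a b)"
  unfolding cop_def by (simp add: sum_distrib_left sum_distrib_right, rule sum.swap)
lemma cop_scal: "cop (\<lambda>x. k * f x) a b = k * cop f a b"
  unfolding cop_def by (simp add: sum_distrib_left mult_ac)
lemma crd2_sum: "crd2 (\<lambda>x y. \<Sum>l<n. f l x y) a b = (\<Sum>l<n. crd2 (f l) a b)"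
  unfolding crd2_def by (simp add: sum_distrib_left sum_distrib_right mult_ac, rule mv3[symmetric])
lemma crd2_scal: "crd2 (\<lambda>x y. k * f x y) a b = k * crd2 f a b"
  unfolding crd2_def by (simp add: sum_distrib_left mult_ac)

lemma tmul_sum1: "tmul (\<lambda>x y. \<Sum>l<n. f l x y) B z w = (\<Sum>l<n. tmul (f l) B z w)"
  unfolding tmul_def by (simp add: sum_distrib_left sum_distrib_right mult_ac, rule mv5[symmetric])
lemma tmul_scal1: "tmul (\<lambda>x y. k * f x y) B z w = k * tmul f B z w"
  unfolding tmul_def by (simp add: sum_distrib_left mult_ac)
lemma tmul_sum2: "tmul A (\<lambda>x y. \<Sum>l<n. f l x y) z w = (\<Sum>l<n. tmul A (f l) z w)"
  unfolding tmul_def by (simp add: sum_distrib_left sum_distrib_right mult_ac, rule mv5[symmetric])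
lemma tmul_scal2: "tmul A (\<lambda>x y. k * f x y) z w = k * tmul A f z w"
  unfolding tmul_def by (simp add: sum_distrib_left mult_ac)

lemma mul_sum1f: "mul (\<lambda>p. \<Sum>l<n. f l p) w = (\<lambda>r. \<Sum>l<n. mul (f l) w r)"
  by (rule ext, rule mul_sum1)
lemma mul_scal1f: "mul (\<lambda>p. k * f p) w = (\<lambda>r. k * mul f w r)"
  by (rule ext, rule mul_scal1)
lemma mul_sum2f: "mul v (\<lambda>p. \<Sum>l<n. f l p) = (\<lambda>r. \<Sum>l<n. mul v (f l) r)"
  by (rule ext, rule mul_sum2)
lemma mul_scal2f: "mul v (\<lambda>p. k * f p) = (\<lambda>r. k * mul v f r)"
  by (rule ext, rule mul_scal2)
lemma ant_sumf: "ant (\<lambda>p. \<Sum>l<n. f l p) = (\<lambda>r. \<Sum>l<n. ant (f l) r)"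
  by (rule ext, rule ant_sum)
lemma ant_scalf: "ant (\<lambda>p. k * f p) = (\<lambda>r. k * ant f r)"
  by (rule ext, rule ant_scal)

lemma mul_eta: "mul x y = (\<lambda>l. \<Sum>p<n. \<Sum>q<n. x p * y q * m p q l)"
  by (rule ext, simp add: mul_def)
lemma cop_eta: "cop v = (\<lambda>x y. \<Sum>i<n. v i * d i x y)"
  by (rule ext, rule ext, simp add: cop_def)

lemma v_unitL: assumes "r < n" shows "mul u w r = w r"
proof -
  have "mul u w r = (\<Sum>q<n. w q * (\<Sum>p<n. u p * m p q r))"
    unfolding mul_def by (simp add: sum_distrib_left mult_ac, rule sum.swap)
  also have "\<dots> = (\<Sum>q<n. w q * (if q = r then 1 else 0))"
    using assms by (simp add: o_unitL)
  finally show ?thesis using assms by (simp add: if_distrib[of "\<lambda>z. _ * z"] cong: if_cong)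
qed

lemma v_unitR: assumes "r < n" shows "mul w u r = w r"
proof -
  have "mul w u r = (\<Sum>p<n. w p * (\<Sum>q<n. u q * m p q r))"
    unfolding mul_def by (simp add: sum_distrib_left mult_ac)
  also have "\<dots> = (\<Sum>p<n. w p * (if p = r then 1 else 0))"
    using assms by (simp add: o_unitR)
  finally show ?thesis using assms by (simp add: if_distrib[of "\<lambda>z. _ * z"] cong: if_cong)
qed

lemma v_ehom: "eps (mul v w) = eps v * eps w"
proof -
  have "eps (mul v w) = (\<Sum>p<n. \<Sum>q<n. v p * w q * (\<Sum>k<n. m p q k * c k))"
    unfolding eps_def mul_def by (simp add: sum_distrib_left sum_distrib_right mult_ac, (rule trans[OF sum.swap], rule sum.cong[OF refl], rule sum.swap))
  also have "\<dots> = (\<Sum>p<n. \<Sum>q<n. v p * w q * (c p * c q))"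
    by (simp add: o_ehom)
  also have "\<dots> = eps v * eps w"
    unfolding eps_def by (simp add: sum_product mult_ac)
  finally show ?thesis .
qed

lemma v_dhom: assumes "a < n" "b < n" shows "cop (mul v w) a b = tmul (cop v) (cop w) a b"
proof -
  have "cop (mul v w) a b = (\<Sum>p<n. \<Sum>q<n. v p * w q * cop (m p q) a b)"
    by (simp add: mul_eta cop_sum cop_scal)
  also have "\<dots> = (\<Sum>p<n. \<Sum>q<n. v p * w q * tmul (d p) (d q) a b)"
    using assms by (simp add: cop_def tmul_def o_dhom)
  also have "\<dots> = tmul (cop v) (cop w) a b"
    by (simp add: cop_eta tmul_sum1 tmul_scal1 tmul_sum2 tmul_scal2 sum_distrib_left mult_ac)
  finally show ?thesis .
qed

lemma v_coassoc: assumes "x < n" "y < n" "z < n"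
  shows "(\<Sum>p<n. cop v p y * d p x z) = (\<Sum>l<n. cop v x l * d l z y)"
proof -
  have "(\<Sum>p<n. cop v p y * d p x z) = (\<Sum>p<n. \<Sum>i<n. v i * (d i p y * d p x z))"
    by (simp add: cop_def sum_distrib_left sum_distrib_right mult_ac)
  also have "\<dots> = (\<Sum>i<n. \<Sum>p<n. v i * (d i p y * d p x z))" by (rule sum.swap)
  also have "\<dots> = (\<Sum>i<n. v i * (\<Sum>p<n. d i p y * d p x z))" by (simp add: sum_distrib_left)
  also have "\<dots> = (\<Sum>i<n. v i * (\<Sum>l<n. d i x l * d l z y))" using assms by (simp add: o_coassoc)
  also have "\<dots> = (\<Sum>i<n. \<Sum>l<n. v i * (d i x l * d l z y))" by (simp add: sum_distrib_left)
  also have "\<dots> = (\<Sum>l<n. \<Sum>i<n. v i * (d i x l * d l z y))" by (rule sum.swap)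
  also have "\<dots> = (\<Sum>l<n. cop v x l * d l z y)" by (simp add: cop_def sum_distrib_left sum_distrib_right mult_ac)
  finally show ?thesis .
qed

lemma v_counitL: assumes "y < n" shows "(\<Sum>x<n. cop v x y * c x) = v y"
proof -
  have "(\<Sum>x<n. cop v x y * c x) = (\<Sum>x<n. \<Sum>i<n. v i * (d i x y * c x))"
    by (simp add: cop_def sum_distrib_left sum_distrib_right mult_ac)
  also have "\<dots> = (\<Sum>i<n. \<Sum>x<n. v i * (d i x y * c x))" by (rule sum.swap)
  also have "\<dots> = (\<Sum>i<n. v i * (\<Sum>x<n. d i x y * c x))" by (simp add: sum_distrib_left)
  also have "\<dots> = (\<Sum>i<n. v i * (if i = y then 1 else 0))" using assms by (simp add: o_counitL)
  also have "\<dots> = v y" using assms by (simp add: if_distrib[of "\<lambda>z. _ * z"] cong: if_cong)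
  finally show ?thesis .
qed

lemma v_counitR: assumes "x < n" shows "(\<Sum>y<n. cop v x y * c y) = v x"
proof -
  have "(\<Sum>y<n. cop v x y * c y) = (\<Sum>y<n. \<Sum>i<n. v i * (d i x y * c y))"
    by (simp add: cop_def sum_distrib_left sum_distrib_right mult_ac)
  also have "\<dots> = (\<Sum>i<n. \<Sum>y<n. v i * (d i x y * c y))" by (rule sum.swap)
  also have "\<dots> = (\<Sum>i<n. v i * (\<Sum>y<n. d i x y * c y))" by (simp add: sum_distrib_left)
  also have "\<dots> = (\<Sum>i<n. v i * (if i = x then 1 else 0))" using assms by (simp add: o_counitR)
  also have "\<dots> = v x" using assms by (simp add: if_distrib[of "\<lambda>z. _ * z"] cong: if_cong)
  finally show ?thesis .
qed

lemma v_dunit: assumes "a < n" "b < n" shows "cop u a b = u a * u b"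
  using assms by (simp add: cop_def o_dunit)

lemma v_antL: assumes "k < n"
  shows "(\<Sum>x<n. \<Sum>y<n. \<Sum>r<n. cop v x y * s x r * m r y k) = eps v * u k"
proof -
  have "(\<Sum>x<n. \<Sum>y<n. \<Sum>r<n. cop v x y * s x r * m r y k)
      = (\<Sum>x<n. \<Sum>y<n. \<Sum>r<n. \<Sum>i<n. v i * (d i x y * s x r * m r y k))"
    by (simp add: cop_def sum_distrib_left sum_distrib_right mult_ac)
  also have "\<dots> = (\<Sum>i<n. \<Sum>x<n. \<Sum>y<n. \<Sum>r<n. v i * (d i x y * s x r * m r y k))"
    by (rule mv4[symmetric])
  also have "\<dots> = (\<Sum>i<n. v i * (\<Sum>x<n. \<Sum>y<n. \<Sum>r<n. d i x y * s x r * m r y k))"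
    by (simp add: sum_distrib_left)
  also have "\<dots> = (\<Sum>i<n. v i * (c i * u k))" using assms by (simp add: o_antL)
  also have "\<dots> = eps v * u k" by (simp add: eps_def sum_distrib_left sum_distrib_right mult_ac)
  finally show ?thesis .
qed

lemma v_antR: assumes "k < n"
  shows "(\<Sum>x<n. \<Sum>y<n. \<Sum>r<n. cop v x y * s y r * m x r k) = eps v * u k"
proof -
  have "(\<Sum>x<n. \<Sum>y<n. \<Sum>r<n. cop v x y * s y r * m x r k)
      = (\<Sum>x<n. \<Sum>y<n. \<Sum>r<n. \<Sum>i<n. v i * (d i x y * s y r * m x r k))"
    by (simp add: cop_def sum_distrib_left sum_distrib_right mult_ac)
  also have "\<dots> = (\<Sum>i<n. \<Sum>x<n. \<Sum>y<n. \<Sum>r<n. v i * (d i x y * s y r * m x r k))"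
    by (rule mv4[symmetric])
  also have "\<dots> = (\<Sum>i<n. v i * (\<Sum>x<n. \<Sum>y<n. \<Sum>r<n. d i x y * s y r * m x r k))"
    by (simp add: sum_distrib_left)
  also have "\<dots> = (\<Sum>i<n. v i * (c i * u k))" using assms by (simp add: o_antR)
  also have "\<dots> = eps v * u k" by (simp add: eps_def sum_distrib_left sum_distrib_right mult_ac)
  finally show ?thesis .
qed

lemma v_assoc: assumes "r < n" shows "mul (mul x y) z r = mul x (mul y z) r"
proof -
  have A: "mul (m p q) z r = (\<Sum>t<n. z t * (\<Sum>l<n. m p q l * m l t r))" for p q
    unfolding mul_def by (simp add: sum_distrib_left mult_ac, rule sum.swap)
  have B: "mul x (m q t) r = (\<Sum>p<n. x p * (\<Sum>l<n. m q t l * m p l r))" for q t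
    unfolding mul_def by (simp add: sum_distrib_left mult_ac)
  have "mul (mul x y) z r = (\<Sum>p<n. \<Sum>q<n. x p * y q * mul (m p q) z r)"
    by (simp add: mul_eta[of x y] mul_sum1 mul_scal1)
  also have "\<dots> = (\<Sum>p<n. \<Sum>q<n. \<Sum>t<n. x p * y q * z t * (\<Sum>l<n. m p q l * m l t r))"
    by (simp add: A sum_distrib_left mult_ac)
  also have "\<dots> = (\<Sum>p<n. \<Sum>q<n. \<Sum>t<n. x p * y q * z t * (\<Sum>l<n. m q t l * m p l r))"
    using assms by (intro sum.cong refl, simp add: o_assoc)
  also have "\<dots> = (\<Sum>q<n. \<Sum>t<n. \<Sum>p<n. x p * y q * z t * (\<Sum>l<n. m q t l * m p l r))"
    by (rule mv3)
  also have "\<dots> = (\<Sum>q<n. \<Sum>t<n. y q * z t * mul x (m q t) r)"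
    by (simp add: B sum_distrib_left mult_ac)
  also have "\<dots> = mul x (mul y z) r"
    by (simp add: mul_eta[of y z] mul_sum2 mul_scal2)
  finally show ?thesis .
qed

definition nM :: "nat \<Rightarrow> nat \<Rightarrow> nat \<Rightarrow> 'k" where "nM a b r = crd (mul (P a) (P b)) r"
definition nU :: "nat \<Rightarrow> 'k" where "nU r = crd u r"
definition nD :: "nat \<Rightarrow> nat \<Rightarrow> nat \<Rightarrow> 'k" where "nD a x y = crd2 (cop (P a)) x y"
definition nC :: "nat \<Rightarrow> 'k" where "nC a = eps (P a)"
definition nS :: "nat \<Rightarrow> nat \<Rightarrow> 'k" where "nS a b = crd (ant (P a)) b"

lemma R2: assumes "p < n" shows "(\<Sum>l<n. crd X l * P l p) = X p"
proof -
  have "(\<Sum>l<n. crd X l * P l p) = (\<Sum>l<n. \<Sum>x<n. X x * (Q x l * P l p))"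
    by (simp add: crd_def sum_distrib_left sum_distrib_right mult_ac)
  also have "\<dots> = (\<Sum>x<n. \<Sum>l<n. X x * (Q x l * P l p))" by (rule sum.swap)
  also have "\<dots> = (\<Sum>x<n. X x * (if x = p then 1 else 0))"
    using assms by (simp add: sum_distrib_left[symmetric] QP)
  also have "\<dots> = X p" using assms by (simp add: if_distrib[of "\<lambda>z. _ * z"] cong: if_cong)
  finally show ?thesis .
qed

lemma crdP: assumes "a < n" "r < n" shows "crd (P a) r = (if a = r then 1 else 0)"
  using assms by (simp add: crd_def PQ)

lemma crd_cong: "(\<And>x. x < n \<Longrightarrow> v x = v' x) \<Longrightarrow> crd v r = crd v' r"
  unfolding crd_def by (rule sum.cong) auto
lemma eps_cong: "(\<And>x. x < n \<Longrightarrow> v x = v' x) \<Longrightarrow> eps v = eps v'"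
  unfolding eps_def by (rule sum.cong) auto
lemma mul_cong: "(\<And>x. x < n \<Longrightarrow> v x = v' x) \<Longrightarrow> (\<And>x. x < n \<Longrightarrow> w x = w' x) \<Longrightarrow> mul v w r = mul v' w' r"
  unfolding mul_def by (intro sum.cong) auto
lemma ant_cong: "(\<And>x. x < n \<Longrightarrow> v x = v' x) \<Longrightarrow> ant v r = ant v' r"
  unfolding ant_def by (rule sum.cong) auto
lemma cop_cong: "(\<And>x. x < n \<Longrightarrow> v x = v' x) \<Longrightarrow> cop v a b = cop v' a b"
  unfolding cop_def by (rule sum.cong) auto
lemma crd2_cong: "(\<And>x y. x < n \<Longrightarrow> y < n \<Longrightarrow> T x y = T' x y) \<Longrightarrow> crd2 T a b = crd2 T' a b"
  unfolding crd2_def by (intro sum.cong) auto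

lemma K1: "(\<Sum>l<n. crd X l * crd (mul (P l) w) r) = crd (mul X w) r"
proof -
  have "(\<Sum>l<n. crd X l * crd (mul (P l) w) r) = crd (mul (\<lambda>p. \<Sum>l<n. crd X l * P l p) w) r"
    by (simp add: mul_sum1f mul_scal1f crd_sum crd_scal)
  also have "\<dots> = crd (mul X w) r"
    by (intro crd_cong mul_cong) (simp_all add: R2)
  finally show ?thesis .
qed

lemma K2: "(\<Sum>l<n. crd X l * crd (mul v (P l)) r) = crd (mul v X) r"
proof -
  have "(\<Sum>l<n. crd X l * crd (mul v (P l)) r) = crd (mul v (\<lambda>p. \<Sum>l<n. crd X l * P l p)) r"
    by (simp add: mul_sum2f mul_scal2f crd_sum crd_scal)
  also have "\<dots> = crd (mul v X) r"
    by (intro crd_cong mul_cong) (simp_all add: R2)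
  finally show ?thesis .
qed

lemma K3: "(\<Sum>l<n. crd X l * crd2 (cop (P l)) a b) = crd2 (cop X) a b"
proof -
  have "(\<Sum>l<n. crd X l * crd2 (cop (P l)) a b) = crd2 (\<lambda>x y. cop (\<lambda>p. \<Sum>l<n. crd X l * P l p) x y) a b"
    by (simp add: cop_sum cop_scal crd2_sum crd2_scal)
  also have "\<dots> = crd2 (cop X) a b"
    by (intro crd2_cong cop_cong) (simp_all add: R2)
  finally show ?thesis .
qed

lemma K4: "(\<Sum>l<n. crd X l * eps (P l)) = eps X"
proof -
  have "(\<Sum>l<n. crd X l * eps (P l)) = eps (\<lambda>p. \<Sum>l<n. crd X l * P l p)"
    by (simp add: eps_sum eps_scal)
  also have "\<dots> = eps X"
    by (intro eps_cong) (simp_all add: R2)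
  finally show ?thesis .
qed

lemma K5: "(\<Sum>l<n. crd X l * crd (ant (P l)) r) = crd (ant X) r"
proof -
  have "(\<Sum>l<n. crd X l * crd (ant (P l)) r) = crd (ant (\<lambda>p. \<Sum>l<n. crd X l * P l p)) r"
    by (simp add: ant_sumf ant_scalf crd_sum crd_scal)
  also have "\<dots> = crd (ant X) r"
    by (intro crd_cong ant_cong) (simp_all add: R2)
  finally show ?thesis .
qed

lemma crd2_1: "crd2 T l r = crd (\<lambda>x. \<Sum>y<n. T x y * Q y r) l"
  by (simp add: crd2_def crd_def sum_distrib_left sum_distrib_right mult_ac)
lemma crd2_2: "crd2 T a l = crd (\<lambda>y. \<Sum>x<n. T x y * Q x a) l"
proof -
  have "crd2 T a l = (\<Sum>x<n. \<Sum>y<n. T x y * Q x a * Q y l)" by (simp add: crd2_def)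
  also have "\<dots> = (\<Sum>y<n. \<Sum>x<n. T x y * Q x a * Q y l)" by (rule sum.swap)
  also have "\<dots> = crd (\<lambda>y. \<Sum>x<n. T x y * Q x a) l" by (simp add: crd_def sum_distrib_right)
  finally show ?thesis .
qed

lemma n_assoc: assumes "a < n" "b < n" "c' < n" "r < n"
  shows "(\<Sum>l<n. nM a b l * nM l c' r) = (\<Sum>l<n. nM b c' l * nM a l r)"
proof -
  have "(\<Sum>l<n. nM a b l * nM l c' r) = crd (mul (mul (P a) (P b)) (P c')) r"
    unfolding nM_def by (rule K1)
  also have "\<dots> = crd (mul (P a) (mul (P b) (P c'))) r"
    by (intro crd_cong) (simp add: v_assoc)
  also have "\<dots> = (\<Sum>l<n. nM b c' l * nM a l r)"
    unfolding nM_def by (rule K2[symmetric])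
  finally show ?thesis .
qed

lemma n_unitL: assumes "j < n" "k < n" shows "(\<Sum>l<n. nU l * nM l j k) = (if j = k then 1 else 0)"
proof -
  have "(\<Sum>l<n. nU l * nM l j k) = crd (mul u (P j)) k"
    unfolding nM_def nU_def by (rule K1)
  also have "\<dots> = crd (P j) k" by (intro crd_cong) (simp add: v_unitL)
  finally show ?thesis using assms by (simp add: crdP)
qed

lemma n_unitR: assumes "j < n" "k < n" shows "(\<Sum>l<n. nU l * nM j l k) = (if j = k then 1 else 0)"
proof -
  have "(\<Sum>l<n. nU l * nM j l k) = crd (mul (P j) u) k"
    unfolding nM_def nU_def by (rule K2)
  also have "\<dots> = crd (P j) k" by (intro crd_cong) (simp add: v_unitR)
  finally show ?thesis using assms by (simp add: crdP)
qed

lemma n_counitL: assumes "i < n" "k < n" shows "(\<Sum>j<n. nD i j k * nC j) = (if i = k then 1 else 0)"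
proof -
  have "(\<Sum>j<n. nD i j k * nC j) = eps (\<lambda>x. \<Sum>y<n. cop (P i) x y * Q y k)"
    unfolding nD_def nC_def crd2_1 by (rule K4)
  also have "\<dots> = (\<Sum>x<n. \<Sum>y<n. cop (P i) x y * Q y k * c x)"
    by (simp add: eps_def sum_distrib_right)
  also have "\<dots> = (\<Sum>y<n. \<Sum>x<n. cop (P i) x y * Q y k * c x)" by (rule sum.swap)
  also have "\<dots> = (\<Sum>y<n. (\<Sum>x<n. cop (P i) x y * c x) * Q y k)"
    by (simp add: sum_distrib_left sum_distrib_right mult_ac)
  also have "\<dots> = (\<Sum>y<n. P i y * Q y k)" by (intro sum.cong refl) (simp add: v_counitL)
  finally show ?thesis using assms by (simp add: PQ)
qed

lemma n_counitR: assumes "i < n" "j < n" shows "(\<Sum>k<n. nD i j k * nC k) = (if i = j then 1 else 0)"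
proof -
  have "(\<Sum>k<n. nD i j k * nC k) = eps (\<lambda>y. \<Sum>x<n. cop (P i) x y * Q x j)"
    unfolding nD_def nC_def crd2_2 by (rule K4)
  also have "\<dots> = (\<Sum>y<n. \<Sum>x<n. cop (P i) x y * Q x j * c y)"
    by (simp add: eps_def sum_distrib_right)
  also have "\<dots> = (\<Sum>x<n. \<Sum>y<n. cop (P i) x y * Q x j * c y)" by (rule sum.swap)
  also have "\<dots> = (\<Sum>x<n. (\<Sum>y<n. cop (P i) x y * c y) * Q x j)"
    by (simp add: sum_distrib_left sum_distrib_right mult_ac)
  also have "\<dots> = (\<Sum>x<n. P i x * Q x j)" by (intro sum.cong refl) (simp add: v_counitR)
  finally show ?thesis using assms by (simp add: PQ)
qed

lemma n_ehom: assumes "i < n" "j < n" shows "(\<Sum>k<n. nM i j k * nC k) = nC i * nC j"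
  unfolding nM_def nC_def by (simp add: K4 v_ehom)

lemma n_eu: "(\<Sum>k<n. nU k * nC k) = 1"
  unfolding nU_def nC_def by (simp add: K4 o_eu[unfolded eps_def[symmetric]])

lemma crd2_prod: "crd2 (\<lambda>x y. f x * g y) a b = crd f a * crd g b"
  by (simp add: crd2_def crd_def sum_product mult_ac)

lemma n_dunit: assumes "a < n" "b < n" shows "(\<Sum>k<n. nU k * nD k a b) = nU a * nU b"
proof -
  have "(\<Sum>k<n. nU k * nD k a b) = crd2 (cop u) a b"
    unfolding nU_def nD_def by (rule K3)
  also have "\<dots> = crd2 (\<lambda>x y. u x * u y) a b"
    by (intro crd2_cong) (simp add: v_dunit)
  finally show ?thesis by (simp add: crd2_prod nU_def)
qed

lemma n_coassoc: assumes "i < n" "a < n" "b < n" "r < n"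
  shows "(\<Sum>l<n. nD i l r * nD l a b) = (\<Sum>l<n. nD i a l * nD l b r)"
proof -
  define A where "A = cop (P i)"
  have "(\<Sum>l<n. nD i l r * nD l a b) = crd2 (cop (\<lambda>x. \<Sum>y<n. A x y * Q y r)) a b"
    unfolding nD_def crd2_1[of "cop (P i)"] A_def by (rule K3)
  also have "\<dots> = (\<Sum>z<n. \<Sum>w<n. \<Sum>y<n. Q z a * Q w b * Q y r * (\<Sum>p<n. A p y * d p z w))"
    by (simp add: crd2_def cop_def sum_distrib_left sum_distrib_right mult_ac, rule sum.cong[OF refl], rule sum.cong[OF refl], rule sum.swap)
  also have "\<dots> = (\<Sum>z<n. \<Sum>w<n. \<Sum>y<n. Q z a * Q w b * Q y r * (\<Sum>l<n. A z l * d l w y))"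
    using assms unfolding A_def by (intro sum.cong refl) (simp add: v_coassoc)
  also have "\<dots> = (\<Sum>w<n. \<Sum>y<n. \<Sum>z<n. Q z a * Q w b * Q y r * (\<Sum>l<n. A z l * d l w y))"
    by (rule mv3)
  also have "\<dots> = (\<Sum>w<n. \<Sum>y<n. \<Sum>z<n. \<Sum>l<n. Q z a * Q w b * Q y r * (A z l * d l w y))"
    by (simp add: sum_distrib_left)
  also have "\<dots> = (\<Sum>w<n. \<Sum>y<n. \<Sum>l<n. \<Sum>z<n. Q z a * Q w b * Q y r * (A z l * d l w y))"
    by (rule sum.cong[OF refl], rule sum.cong[OF refl], rule sum.swap)
  also have "\<dots> = crd2 (cop (\<lambda>y. \<Sum>x<n. A x y * Q x a)) b r"
    by (simp add: crd2_def cop_def sum_distrib_left sum_distrib_right mult_ac)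
  also have "\<dots> = (\<Sum>l<n. nD i a l * nD l b r)"
    unfolding nD_def crd2_2[of "cop (P i)"] A_def by (rule K3[symmetric])
  finally show ?thesis .
qed

definition G :: "(nat \<Rightarrow> nat \<Rightarrow> 'k) \<Rightarrow> (nat \<Rightarrow> nat \<Rightarrow> 'k) \<Rightarrow> nat \<Rightarrow> nat \<Rightarrow> 'k" where
  "G T1 T2 a b = (\<Sum>p<n. \<Sum>q<n. \<Sum>r<n. \<Sum>t<n.
      (-1) ^ (deg' q * deg' r) * T1 p q * T2 r t * nM p r a * nM q t b)"

lemma G_sum1: "G (\<lambda>x y. \<Sum>l<n. f l x y) B z w = (\<Sum>l<n. G (f l) B z w)"
  unfolding G_def by (simp add: sum_distrib_left sum_distrib_right mult_ac, rule mv5[symmetric])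
lemma G_scal1: "G (\<lambda>x y. k * f x y) B z w = k * G f B z w"
  unfolding G_def by (simp add: sum_distrib_left mult_ac)
lemma G_sum2: "G A (\<lambda>x y. \<Sum>l<n. f l x y) z w = (\<Sum>l<n. G A (f l) z w)"
  unfolding G_def by (simp add: sum_distrib_left sum_distrib_right mult_ac, rule mv5[symmetric])
lemma G_scal2: "G A (\<lambda>x y. k * f x y) z w = k * G A f z w"
  unfolding G_def by (simp add: sum_distrib_left mult_ac)

lemma mul_delta: assumes "x < n" "x' < n"
  shows "mul (\<lambda>z. if x = z then 1 else 0) (\<lambda>z. if x' = z then 1 else 0) r = m x x' r"
proof -
  have "mul (\<lambda>z. if x = z then 1 else 0) (\<lambda>z. if x' = z then 1 else 0) r
      = (\<Sum>p<n. (if x = p then 1 else 0) * (\<Sum>q<n. (if x' = q then 1 else 0) * m p q r))"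
    unfolding mul_def by (simp add: sum_distrib_left mult.assoc)
  also have "\<dots> = m x x' r" using assms by (simp add: sum_delta_mul)
  finally show ?thesis .
qed

lemma ant_delta: assumes "x < n" shows "ant (\<lambda>z. if x = z then 1 else 0) r = s x r"
  using assms by (simp add: ant_def if_distrib[of "\<lambda>z. z * _"] cong: if_cong)

lemma Mcontract: assumes "x < n" "x' < n"
  shows "(\<Sum>p<n. \<Sum>r<n. Q x p * Q x' r * nM p r a) = crd (m x x') a"
proof -
  have "(\<Sum>p<n. \<Sum>r<n. Q x p * Q x' r * nM p r a)
      = crd (mul (\<lambda>z. \<Sum>p<n. Q x p * P p z) (\<lambda>z. \<Sum>r<n. Q x' r * P r z)) a"
    unfolding nM_def by (simp add: mul_sum1f mul_scal1f mul_sum2f mul_scal2f crd_sum crd_scal sum_distrib_left mult.assoc)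
  also have "\<dots> = crd (mul (\<lambda>z. if x = z then 1 else 0) (\<lambda>z. if x' = z then 1 else 0)) a"
    using assms by (intro crd_cong mul_cong) (simp_all add: QP)
  also have "\<dots> = crd (m x x') a"
    using assms by (intro crd_cong) (simp add: mul_delta)
  finally show ?thesis .
qed

lemma prod4: "(\<Sum>p<(n::nat). \<Sum>r<n. F p r) * (\<Sum>q<n. \<Sum>t<n. H q t) = (\<Sum>p<n. \<Sum>q<n. \<Sum>r<n. \<Sum>t<n. (F p r * H q t :: 'k))"
  by (simp add: sum_product)

lemma Gcontract: assumes "x < n" "y < n" "x' < n" "y' < n"
  shows "G (\<lambda>p q. Q x p * Q y q) (\<lambda>r t. Q x' r * Q y' t) a b
       = (-1) ^ (deg y * deg x') * (crd (m x x') a * crd (m y y') b)"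
proof -
  have "G (\<lambda>p q. Q x p * Q y q) (\<lambda>r t. Q x' r * Q y' t) a b
      = (\<Sum>p<n. \<Sum>q<n. \<Sum>r<n. \<Sum>t<n. (-1) ^ (deg y * deg x') *
           ((Q x p * Q x' r * nM p r a) * (Q y q * Q y' t * nM q t b)))"
    unfolding G_def
  proof (intro sum.cong refl)
    fix p q r t assume "p \<in> {..<n}" "q \<in> {..<n}" "r \<in> {..<n}" "t \<in> {..<n}"
    then have pn: "q < n" "r < n" by auto
    show "(-1) ^ (deg' q * deg' r) * (Q x p * Q y q) * (Q x' r * Q y' t) * nM p r a * nM q t b =
          (-1) ^ (deg y * deg x') * ((Q x p * Q x' r * nM p r a) * (Q y q * Q y' t * nM q t b))"
    proof (cases "Q y q = 0 \<or> Q x' r = 0")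
      case True then show ?thesis by auto
    next
      case False
      then have "deg' q = deg y" "deg' r = deg x'" using gQ assms pn by blast+
      then show ?thesis by (simp add: mult_ac)
    qed
  qed
  also have "\<dots> = (-1) ^ (deg y * deg x') * ((\<Sum>p<n. \<Sum>r<n. Q x p * Q x' r * nM p r a) *
                    (\<Sum>q<n. \<Sum>t<n. Q y q * Q y' t * nM q t b))"
    unfolding prod4 by (simp only: sum_distrib_left)
  also have "\<dots> = (-1) ^ (deg y * deg x') * (crd (m x x') a * crd (m y y') b)"
    using assms by (simp add: Mcontract)
  finally show ?thesis .
qed

lemma nD_eta: "nD i = (\<lambda>p q. \<Sum>x<n. \<Sum>y<n. cop (P i) x y * (Q x p * Q y q))"
  by (rule ext, rule ext, simp add: nD_def crd2_def mult.assoc)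

lemma tmul_eta: "tmul A B = (\<lambda>z w. \<Sum>x<n. \<Sum>y<n. \<Sum>x'<n. \<Sum>y'<n.
      (-1) ^ (deg y * deg x') * (A x y * (B x' y' * (m x x' z * m y y' w))))"
  by (rule ext, rule ext, simp add: tmul_def mult.assoc)

lemma n_dhom: assumes "i < n" "j < n" "a < n" "b < n"
  shows "(\<Sum>k<n. nM i j k * nD k a b) =
        (\<Sum>p<n. \<Sum>q<n. \<Sum>r<n. \<Sum>t<n.
            (-1) ^ (deg' q * deg' r) * nD i p q * nD j r t * nM p r a * nM q t b)"
proof -
  define A where "A = cop (P i)"
  define B where "B = cop (P j)"
  have "(\<Sum>k<n. nM i j k * nD k a b) = crd2 (cop (mul (P i) (P j))) a b"
    unfolding nM_def nD_def by (rule K3)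
  also have "\<dots> = crd2 (tmul A B) a b"
    unfolding A_def B_def by (intro crd2_cong) (simp add: v_dhom)
  also have "\<dots> = (\<Sum>x<n. \<Sum>y<n. \<Sum>x'<n. \<Sum>y'<n.
      (-1) ^ (deg y * deg x') * (A x y * (B x' y' * (crd (m x x') a * crd (m y y') b))))"
    unfolding tmul_eta by (simp add: crd2_sum crd2_scal crd2_prod)
  also have "\<dots> = (\<Sum>x<n. \<Sum>y<n. \<Sum>x'<n. \<Sum>y'<n.
      A x y * (B x' y' * G (\<lambda>p q. Q x p * Q y q) (\<lambda>r t. Q x' r * Q y' t) a b))"
    by (intro sum.cong refl) (simp add: Gcontract mult_ac)
  also have "\<dots> = G (nD i) (nD j) a b"
    unfolding nD_eta A_def B_def by (simp add: G_sum1 G_scal1 G_sum2 G_scal2 sum_distrib_left)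
  finally show ?thesis by (simp add: G_def)
qed

lemma GLcontract: assumes "x < n" "y < n"
  shows "(\<Sum>p<n. \<Sum>q<n. Q x p * Q y q * crd (mul (ant (P p)) (P q)) k) = crd (\<lambda>z. \<Sum>r<n. s x r * m r y z) k"
proof -
  have "(\<Sum>p<n. \<Sum>q<n. Q x p * Q y q * crd (mul (ant (P p)) (P q)) k)
      = crd (mul (ant (\<lambda>z. \<Sum>p<n. Q x p * P p z)) (\<lambda>z. \<Sum>q<n. Q y q * P q z)) k"
    by (simp add: ant_sumf ant_scalf mul_sum1f mul_scal1f mul_sum2f mul_scal2f crd_sum crd_scal sum_distrib_left mult.assoc)
  also have "\<dots> = crd (mul (ant (\<lambda>z. if x = z then 1 else 0)) (\<lambda>z. if y = z then 1 else 0)) k"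
    using assms by (intro crd_cong mul_cong ant_cong) (simp_all add: QP)
  also have "\<dots> = crd (\<lambda>z. \<Sum>r<n. s x r * m r y z) k"
  proof (intro crd_cong)
    fix z assume "z < n"
    have "mul (ant (\<lambda>z. if x = z then 1 else 0)) (\<lambda>z. if y = z then 1 else 0) z
        = (\<Sum>p<n. ant (\<lambda>z. if x = z then 1 else 0) p * (\<Sum>q<n. (if y = q then 1 else 0) * m p q z))"
      unfolding mul_def by (simp add: sum_distrib_left mult.assoc)
    also have "\<dots> = (\<Sum>r<n. s x r * m r y z)"
      using assms by (simp add: sum_delta_mul ant_delta)
    finally show "mul (ant (\<lambda>z. if x = z then 1 else 0)) (\<lambda>z. if y = z then 1 else 0) z = (\<Sum>r<n. s x r * m r y z)" .
  qed
  finally show ?thesis .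
qed

lemma GRcontract: assumes "x < n" "y < n"
  shows "(\<Sum>p<n. \<Sum>q<n. Q x p * Q y q * crd (mul (P p) (ant (P q))) k) = crd (\<lambda>z. \<Sum>r<n. s y r * m x r z) k"
proof -
  have "(\<Sum>p<n. \<Sum>q<n. Q x p * Q y q * crd (mul (P p) (ant (P q))) k)
      = crd (mul (\<lambda>z. \<Sum>p<n. Q x p * P p z) (ant (\<lambda>z. \<Sum>q<n. Q y q * P q z))) k"
    by (simp add: ant_sumf ant_scalf mul_sum1f mul_scal1f mul_sum2f mul_scal2f crd_sum crd_scal sum_distrib_left mult.assoc)
  also have "\<dots> = crd (mul (\<lambda>z. if x = z then 1 else 0) (ant (\<lambda>z. if y = z then 1 else 0))) k"
    using assms by (intro crd_cong mul_cong ant_cong) (simp_all add: QP)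
  also have "\<dots> = crd (\<lambda>z. \<Sum>r<n. s y r * m x r z) k"
  proof (intro crd_cong)
    fix z assume "z < n"
    have "mul (\<lambda>z. if x = z then 1 else 0) (ant (\<lambda>z. if y = z then 1 else 0)) z
        = (\<Sum>p<n. (if x = p then 1 else 0) * (\<Sum>q<n. ant (\<lambda>z. if y = z then 1 else 0) q * m p q z))"
      unfolding mul_def by (simp add: sum_distrib_left mult.assoc)
    also have "\<dots> = (\<Sum>r<n. s y r * m x r z)"
      using assms by (simp add: sum_delta_mul ant_delta)
    finally show "mul (\<lambda>z. if x = z then 1 else 0) (ant (\<lambda>z. if y = z then 1 else 0)) z = (\<Sum>r<n. s y r * m x r z)" .
  qed
  finally show ?thesis .
qed

lemma n_antL: assumes "i < n" "k < n"
  shows "(\<Sum>p<n. \<Sum>q<n. \<Sum>r<n. nD i p q * nS p r * nM r q k) = nC i * nU k"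
proof -
  define A where "A = cop (P i)"
  have "(\<Sum>p<n. \<Sum>q<n. \<Sum>r<n. nD i p q * nS p r * nM r q k)
      = (\<Sum>p<n. \<Sum>q<n. nD i p q * (\<Sum>r<n. nS p r * nM r q k))"
    by (simp add: sum_distrib_left mult.assoc)
  also have "\<dots> = (\<Sum>p<n. \<Sum>q<n. nD i p q * crd (mul (ant (P p)) (P q)) k)"
    unfolding nS_def nM_def by (simp add: K1)
  also have "\<dots> = (\<Sum>p<n. \<Sum>q<n. \<Sum>x<n. \<Sum>y<n. A x y * (Q x p * Q y q * crd (mul (ant (P p)) (P q)) k))"
    unfolding nD_eta A_def by (simp add: sum_distrib_right mult.assoc)
  also have "\<dots> = (\<Sum>q<n. \<Sum>x<n. \<Sum>y<n. \<Sum>p<n. A x y * (Q x p * Q y q * crd (mul (ant (P p)) (P q)) k))"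
    by (rule mv4)
  also have "\<dots> = (\<Sum>x<n. \<Sum>y<n. \<Sum>p<n. \<Sum>q<n. A x y * (Q x p * Q y q * crd (mul (ant (P p)) (P q)) k))"
    by (rule mv4)
  also have "\<dots> = (\<Sum>x<n. \<Sum>y<n. A x y * crd (\<lambda>z. \<Sum>r<n. s x r * m r y z) k)"
    by (intro sum.cong refl) (simp add: sum_distrib_left[symmetric] GLcontract)
  also have "\<dots> = crd (\<lambda>z. \<Sum>x<n. \<Sum>y<n. \<Sum>r<n. A x y * s x r * m r y z) k"
    by (simp add: crd_sum crd_scal mult.assoc sum_distrib_left)
  also have "\<dots> = crd (\<lambda>z. eps (P i) * u z) k"
    unfolding A_def by (intro crd_cong) (simp add: v_antL)
  finally show ?thesis by (simp add: crd_scal nC_def nU_def)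
qed

lemma n_antR: assumes "i < n" "k < n"
  shows "(\<Sum>p<n. \<Sum>q<n. \<Sum>r<n. nD i p q * nS q r * nM p r k) = nC i * nU k"
proof -
  define A where "A = cop (P i)"
  have "(\<Sum>p<n. \<Sum>q<n. \<Sum>r<n. nD i p q * nS q r * nM p r k)
      = (\<Sum>p<n. \<Sum>q<n. nD i p q * (\<Sum>r<n. nS q r * nM p r k))"
    by (simp add: sum_distrib_left mult.assoc)
  also have "\<dots> = (\<Sum>p<n. \<Sum>q<n. nD i p q * crd (mul (P p) (ant (P q))) k)"
    unfolding nS_def nM_def by (simp add: K2)
  also have "\<dots> = (\<Sum>p<n. \<Sum>q<n. \<Sum>x<n. \<Sum>y<n. A x y * (Q x p * Q y q * crd (mul (P p) (ant (P q))) k))"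
    unfolding nD_eta A_def by (simp add: sum_distrib_right mult.assoc)
  also have "\<dots> = (\<Sum>q<n. \<Sum>x<n. \<Sum>y<n. \<Sum>p<n. A x y * (Q x p * Q y q * crd (mul (P p) (ant (P q))) k))"
    by (rule mv4)
  also have "\<dots> = (\<Sum>x<n. \<Sum>y<n. \<Sum>p<n. \<Sum>q<n. A x y * (Q x p * Q y q * crd (mul (P p) (ant (P q))) k))"
    by (rule mv4)
  also have "\<dots> = (\<Sum>x<n. \<Sum>y<n. A x y * crd (\<lambda>z. \<Sum>r<n. s y r * m x r z) k)"
    by (intro sum.cong refl) (simp add: sum_distrib_left[symmetric] GRcontract)
  also have "\<dots> = crd (\<lambda>z. \<Sum>x<n. \<Sum>y<n. \<Sum>r<n. A x y * s y r * m x r z) k"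
    by (simp add: crd_sum crd_scal mult.assoc sum_distrib_left)
  also have "\<dots> = crd (\<lambda>z. eps (P i) * u z) k"
    unfolding A_def by (intro crd_cong) (simp add: v_antR)
  finally show ?thesis by (simp add: crd_scal nC_def nU_def)
qed

lemma n_gm: assumes "a < n" "b < n" "r < n" "nM a b r \<noteq> 0"
  shows "deg' r = (deg' a + deg' b) mod 2"
proof -
  obtain x where x: "x < n" "mul (P a) (P b) x * Q x r \<noteq> 0"
    using sum_nz assms(4) unfolding nM_def crd_def by blast
  then obtain p where p: "p < n" "(\<Sum>q<n. P a p * P b q * m p q x) \<noteq> 0"
    using sum_nz unfolding mul_def by fastforce
  then obtain q where q: "q < n" "P a p * P b q * m p q x \<noteq> 0"
    using sum_nz by blast
  have "deg' r = deg x" using gQ x assms by auto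
  moreover have "deg' a = deg p" "deg' b = deg q" using gP p q assms by auto
  moreover have "deg x = (deg p + deg q) mod 2" using o_gm p q x by auto
  ultimately show ?thesis by simp
qed

lemma n_gu: assumes "r < n" "nU r \<noteq> 0" shows "deg' r = 0"
proof -
  obtain x where x: "x < n" "u x * Q x r \<noteq> 0"
    using sum_nz assms unfolding nU_def crd_def by blast
  then show ?thesis using gQ o_gu assms by force
qed

lemma n_gd: assumes "a < n" "x < n" "y < n" "nD a x y \<noteq> 0"
  shows "deg' a = (deg' x + deg' y) mod 2"
proof -
  obtain x' where x': "x' < n" "(\<Sum>y'<n. cop (P a) x' y' * Q x' x * Q y' y) \<noteq> 0"
    using sum_nz assms(4) unfolding nD_def crd2_def by blast
  then obtain y' where y': "y' < n" "cop (P a) x' y' * Q x' x * Q y' y \<noteq> 0"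
    using sum_nz by blast
  then obtain i where i: "i < n" "P a i * d i x' y' \<noteq> 0"
    using sum_nz unfolding cop_def by fastforce
  have "deg' x = deg x'" "deg' y = deg y'" using gQ x' y' assms by auto
  moreover have "deg' a = deg i" using gP i assms by auto
  moreover have "deg i = (deg x' + deg y') mod 2" using o_gd i x' y' by auto
  ultimately show ?thesis by simp
qed

lemma n_gc: assumes "a < n" "nC a \<noteq> 0" shows "deg' a = 0"
proof -
  obtain p where "p < n" "P a p * c p \<noteq> 0"
    using sum_nz assms unfolding nC_def eps_def by blast
  then show ?thesis using gP o_gc assms by force
qed

lemma n_gs: assumes "a < n" "b < n" "nS a b \<noteq> 0" shows "deg' a = deg' b"
proof -
  obtain x where x: "x < n" "ant (P a) x * Q x b \<noteq> 0"
    using sum_nz assms unfolding nS_def crd_def by blast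
  then obtain p where p: "p < n" "P a p * s p x \<noteq> 0"
    using sum_nz unfolding ant_def by fastforce
  have "deg' b = deg x" using gQ x assms by auto
  moreover have "deg' a = deg p" using gP p assms by auto
  moreover have "deg p = deg x" using o_gs p x by auto
  ultimately show ?thesis by simp
qed

theorem cb_hopf: "hopf_superalgebra_sc n deg' nM nU nD nC nS"
  unfolding hopf_superalgebra_sc_def
  apply (intro conjI allI impI)
                  apply (rule dg'; assumption)
                 apply (rule n_gm; assumption)
                apply (rule n_gu; assumption)
               apply (rule n_gd; assumption)
              apply (rule n_gc; assumption)
             apply (rule n_gs; assumption)
            apply (rule n_assoc; assumption)
           apply (rule n_unitL; assumption)
          apply (rule n_unitR; assumption)
         apply (rule n_coassoc; assumption)
        apply (rule n_counitL; assumption)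
       apply (rule n_counitR; assumption)
      apply (rule n_dhom; assumption)
     apply (rule n_dunit; assumption)
    apply (rule n_ehom; assumption)
   apply (rule n_eu)
  apply (rule n_antL; assumption)
  apply (rule n_antR; assumption)
  done

end


lemma sum3: "(\<Sum>l<3::nat. f l) = f 0 + f 1 + (f 2 :: 'a::comm_monoid_add)"
proof -
  have "{..<3::nat} = {0,1,2}" by auto
  then show ?thesis by (simp add: add_ac)
qed

lemmas hp_deg = hopf_superalgebra_sc_def[THEN iffD1, THEN conjunct1, rule_format]
lemmas hp_gm = hopf_superalgebra_sc_def[THEN iffD1, THEN conjunct2, THEN conjunct1, rule_format]
lemmas hp_gu = hopf_superalgebra_sc_def[THEN iffD1, THEN conjunct2, THEN conjunct2, THEN conjunct1, rule_format]
lemmas hp_gd = hopf_superalgebra_sc_def[THEN iffD1, THEN conjunct2, THEN conjunct2, THEN conjunct2, THEN conjunct1, rule_format]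
lemmas hp_gc = hopf_superalgebra_sc_def[THEN iffD1, THEN conjunct2, THEN conjunct2, THEN conjunct2, THEN conjunct2, THEN conjunct1, rule_format]
lemmas hp_gs = hopf_superalgebra_sc_def[THEN iffD1, THEN conjunct2, THEN conjunct2, THEN conjunct2, THEN conjunct2, THEN conjunct2, THEN conjunct1, rule_format]
lemmas hp_assoc = hopf_superalgebra_sc_def[THEN iffD1, THEN conjunct2, THEN conjunct2, THEN conjunct2, THEN conjunct2, THEN conjunct2, THEN conjunct2, THEN conjunct1, rule_format]
lemmas hp_unitL = hopf_superalgebra_sc_def[THEN iffD1, THEN conjunct2, THEN conjunct2, THEN conjunct2, THEN conjunct2, THEN conjunct2, THEN conjunct2, THEN conjunct2, THEN conjunct1, rule_format]
lemmas hp_unitR = hopf_superalgebra_sc_def[THEN iffD1, THEN conjunct2, THEN conjunct2, THEN conjunct2, THEN conjunct2, THEN conjunct2, THEN conjunct2, THEN conjunct2, THEN conjunct2, THEN conjunct1, rule_format]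
lemmas hp_coassoc = hopf_superalgebra_sc_def[THEN iffD1, THEN conjunct2, THEN conjunct2, THEN conjunct2, THEN conjunct2, THEN conjunct2, THEN conjunct2, THEN conjunct2, THEN conjunct2, THEN conjunct2, THEN conjunct1, rule_format]
lemmas hp_counitL = hopf_superalgebra_sc_def[THEN iffD1, THEN conjunct2, THEN conjunct2, THEN conjunct2, THEN conjunct2, THEN conjunct2, THEN conjunct2, THEN conjunct2, THEN conjunct2, THEN conjunct2, THEN conjunct2, THEN conjunct1, rule_format]
lemmas hp_counitR = hopf_superalgebra_sc_def[THEN iffD1, THEN conjunct2, THEN conjunct2, THEN conjunct2, THEN conjunct2, THEN conjunct2, THEN conjunct2, THEN conjunct2, THEN conjunct2, THEN conjunct2, THEN conjunct2, THEN conjunct2, THEN conjunct1, rule_format]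
lemmas hp_dhom = hopf_superalgebra_sc_def[THEN iffD1, THEN conjunct2, THEN conjunct2, THEN conjunct2, THEN conjunct2, THEN conjunct2, THEN conjunct2, THEN conjunct2, THEN conjunct2, THEN conjunct2, THEN conjunct2, THEN conjunct2, THEN conjunct2, THEN conjunct1, rule_format]
lemmas hp_dunit = hopf_superalgebra_sc_def[THEN iffD1, THEN conjunct2, THEN conjunct2, THEN conjunct2, THEN conjunct2, THEN conjunct2, THEN conjunct2, THEN conjunct2, THEN conjunct2, THEN conjunct2, THEN conjunct2, THEN conjunct2, THEN conjunct2, THEN conjunct2, THEN conjunct1, rule_format]
lemmas hp_ehom = hopf_superalgebra_sc_def[THEN iffD1, THEN conjunct2, THEN conjunct2, THEN conjunct2, THEN conjunct2, THEN conjunct2, THEN conjunct2, THEN conjunct2, THEN conjunct2, THEN conjunct2, THEN conjunct2, THEN conjunct2, THEN conjunct2, THEN conjunct2, THEN conjunct2, THEN conjunct1, rule_format]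
lemmas hp_eu = hopf_superalgebra_sc_def[THEN iffD1, THEN conjunct2, THEN conjunct2, THEN conjunct2, THEN conjunct2, THEN conjunct2, THEN conjunct2, THEN conjunct2, THEN conjunct2, THEN conjunct2, THEN conjunct2, THEN conjunct2, THEN conjunct2, THEN conjunct2, THEN conjunct2, THEN conjunct2, THEN conjunct1, rule_format]
lemmas hp_antL = hopf_superalgebra_sc_def[THEN iffD1, THEN conjunct2, THEN conjunct2, THEN conjunct2, THEN conjunct2, THEN conjunct2, THEN conjunct2, THEN conjunct2, THEN conjunct2, THEN conjunct2, THEN conjunct2, THEN conjunct2, THEN conjunct2, THEN conjunct2, THEN conjunct2, THEN conjunct2, THEN conjunct2, THEN conjunct1, rule_format]
lemmas hp_antR = hopf_superalgebra_sc_def[THEN iffD1, THEN conjunct2, THEN conjunct2, THEN conjunct2, THEN conjunct2, THEN conjunct2, THEN conjunct2, THEN conjunct2, THEN conjunct2, THEN conjunct2, THEN conjunct2, THEN conjunct2, THEN conjunct2, THEN conjunct2, THEN conjunct2, THEN conjunct2, THEN conjunct2, THEN conjunct2, rule_format]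

lemma finalA:
  fixes M D :: "nat \<Rightarrow> nat \<Rightarrow> nat \<Rightarrow> 'k::field_char_0" and U C :: "nat \<Rightarrow> 'k" and S :: "nat \<Rightarrow> nat \<Rightarrow> 'k"
  assumes H: "hopf_superalgebra_sc 3 dg M U D C S"
    and dg: "dg 0 = 0" "dg 1 = 1" "dg 2 = 1"
    and U: "U 0 = 1" "U 1 = 0" "U 2 = 0"
    and C: "C 0 = 1" "C 1 = 0" "C 2 = 0"
  shows False
proof -
  have gm: "\<And>a b r. a < 3 \<Longrightarrow> b < 3 \<Longrightarrow> r < 3 \<Longrightarrow> dg r \<noteq> (dg a + dg b) mod 2 \<Longrightarrow> M a b r = 0"
    using hp_gm[OF H] by blast
  have gd: "\<And>a b r. a < 3 \<Longrightarrow> b < 3 \<Longrightarrow> r < 3 \<Longrightarrow> dg a \<noteq> (dg b + dg r) mod 2 \<Longrightarrow> D a b r = 0"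
    using hp_gd[OF H] by blast
  have unitL: "\<And>j k. j < 3 \<Longrightarrow> k < 3 \<Longrightarrow> (\<Sum>l<3. U l * M l j k) = (if j = k then 1 else 0)"
    using H by (rule hp_unitL)
  have unitR: "\<And>j k. j < 3 \<Longrightarrow> k < 3 \<Longrightarrow> (\<Sum>l<3. U l * M j l k) = (if j = k then 1 else 0)"
    using H by (rule hp_unitR)
  have counitL: "\<And>i k. i < 3 \<Longrightarrow> k < 3 \<Longrightarrow> (\<Sum>j<3. D i j k * C j) = (if i = k then 1 else 0)"
    using H by (rule hp_counitL)
  have counitR: "\<And>i j. i < 3 \<Longrightarrow> j < 3 \<Longrightarrow> (\<Sum>k<3. D i j k * C k) = (if i = j then 1 else 0)"
    using H by (rule hp_counitR)
  have dhom: "\<And>i j a b. i < 3 \<Longrightarrow> j < 3 \<Longrightarrow> a < 3 \<Longrightarrow> b < 3 \<Longrightarrow>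
        (\<Sum>k<3. M i j k * D k a b) =
        (\<Sum>p<3. \<Sum>q<3. \<Sum>r<3. \<Sum>t<3.
            (-1) ^ (dg q * dg r) * D i p q * D j r t * M p r a * M q t b)"
    using H by (rule hp_dhom)
  have dunit: "\<And>a b. a < 3 \<Longrightarrow> b < 3 \<Longrightarrow> (\<Sum>k<3. U k * D k a b) = U a * U b"
    using H by (rule hp_dunit)
  have ehom: "\<And>i j. i < 3 \<Longrightarrow> j < 3 \<Longrightarrow> (\<Sum>k<3. M i j k * C k) = C i * C j"
    using H by (rule hp_ehom)
  note gz = gm[of 0 0 1] gm[of 0 0 2] gm[of 0 1 0] gm[of 0 2 0] gm[of 1 0 0] gm[of 2 0 0]
     gm[of 1 1 1] gm[of 1 1 2] gm[of 1 2 1] gm[of 1 2 2] gm[of 2 1 1] gm[of 2 1 2] gm[of 2 2 1] gm[of 2 2 2]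
     gm[of 0 1 1] gm[of 0 1 2] gm[of 0 2 1] gm[of 0 2 2] gm[of 1 0 1] gm[of 1 0 2] gm[of 2 0 1] gm[of 2 0 2]
     gm[of 1 1 0] gm[of 1 2 0] gm[of 2 1 0] gm[of 2 2 0] gm[of 0 0 0]
  note dz = gd[of 0 0 1] gd[of 0 0 2] gd[of 0 1 0] gd[of 0 2 0] gd[of 1 0 0] gd[of 2 0 0]
     gd[of 1 1 1] gd[of 1 1 2] gd[of 1 2 1] gd[of 1 2 2] gd[of 2 1 1] gd[of 2 1 2] gd[of 2 2 1] gd[of 2 2 2]
     gd[of 0 1 1] gd[of 0 1 2] gd[of 0 2 1] gd[of 0 2 2] gd[of 1 0 1] gd[of 1 0 2] gd[of 2 0 1] gd[of 2 0 2]
     gd[of 1 1 0] gd[of 1 2 0] gd[of 2 1 0] gd[of 2 2 0] gd[of 0 0 0]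
  have Z: "M 0 1 2 = 0" "M 1 0 2 = 0" "M 0 2 1 = 0" "M 2 0 1 = 0" "M 0 1 1 = 1" "M 1 0 1 = 1"
     "M 0 2 2 = 1" "M 2 0 2 = 1" "M 1 1 0 = 0" "M 1 2 0 = 0" "M 2 1 0 = 0" "M 2 2 0 = 0"
    using unitL[of 1 2] unitR[of 1 2] unitL[of 2 1] unitR[of 2 1] unitL[of 1 1] unitR[of 1 1]
      unitL[of 2 2] unitR[of 2 2] ehom[of 1 1] ehom[of 1 2] ehom[of 2 1] ehom[of 2 2]
      U C dg gz by (simp_all add: sum3)
  have Z2: "D 1 0 2 = 0" "D 1 2 0 = 0" "D 2 0 1 = 0" "D 2 1 0 = 0" "D 1 0 1 = 1" "D 1 1 0 = 1"
     "D 2 0 2 = 1" "D 2 2 0 = 1" "D 0 1 1 = 0" "D 0 1 2 = 0" "D 0 2 1 = 0" "D 0 2 2 = 0"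
    using counitL[of 1 2] counitR[of 1 2] counitL[of 2 1] counitR[of 2 1] counitL[of 1 1] counitR[of 1 1]
      counitL[of 2 2] counitR[of 2 2] dunit[of 1 1] dunit[of 1 2] dunit[of 2 1] dunit[of 2 2]
      U C dg dz by (simp_all add: sum3)
  show False
    using dg gz dz Z Z2 dhom[of 1 2 1 2] by (simp add: sum3)
qed


lemma alg:
  fixes \<alpha> a b \<gamma> \<delta> \<nu> g h s1 \<sigma> :: "'k::field_char_0"
  assumes e1: "\<alpha> * a = a * a" and e2: "a * \<gamma> = \<alpha> * \<gamma>" and e4: "b * \<gamma> = a * \<gamma>"
    and f4: "\<delta> * g = g * g"
    and h1: "3 * (\<delta> * \<alpha>) + (2 + (\<delta> * \<delta> * \<alpha> * \<alpha> - \<nu> * \<nu> * \<gamma> * \<gamma>)) = 0"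
    and h3: "- 1 - \<delta> * g * \<alpha> * a - \<delta> * a + \<nu> * h * b * \<gamma> + \<nu> * \<gamma> - g * \<alpha> = 0"
    and h8: "\<nu> * \<gamma> + g * a - g * b - h * a + h * b = 0"
    and a1: "\<delta> * \<alpha> * s1 + \<nu> * \<gamma> * \<sigma> + 1 + s1 = 0"
  shows False
proof -
  have g01: "g = 0 \<or> g = \<delta>"
  proof -
    have "g * (\<delta> - g) = 0" using f4 by algebra
    then show ?thesis by auto
  qed
  show False
  proof (cases "\<gamma> = 0")
    case True
    have q: "(\<delta> * \<alpha> + 1) * (\<delta> * \<alpha> + 2) = 0" using h1 True by algebra
    have "s1 * (\<delta> * \<alpha> + 1) = -1" using a1 True by algebra
    then have "\<delta> * \<alpha> + 1 \<noteq> 0" by auto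
    have "\<delta> * \<alpha> + 2 = 0" using q \<open>\<delta> * \<alpha> + 1 \<noteq> 0\<close> by simp
    then have da: "\<delta> * \<alpha> = -2" by algebra
    have "(1 + g * \<alpha>) * (1 + \<delta> * a) = 0" using h3 True by algebra
    moreover have "1 + g * \<alpha> \<noteq> 0"
    proof
      assume "1 + g * \<alpha> = 0"
      with g01 da show False by auto
    qed
    ultimately have db: "\<delta> * a = -1" by (simp add: add_eq_0_iff)
    have "(\<delta> * \<alpha>) * (\<delta> * a) = (\<delta> * a) * (\<delta> * a)"
      using e1 by (metis mult.assoc mult.left_commute)
    with da db show False by simp
  next
    case False
    have aa: "a = \<alpha>" using e2 False by simp
    have bb: "b = a" using e4 False by simp
    have "\<nu> * \<gamma> = 0" using h8 aa bb by simp
    then have nu: "\<nu> = 0" using False by simp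
    have q: "(\<delta> * \<alpha> + 1) * (\<delta> * \<alpha> + 2) = 0" using h1 nu by algebra
    have "s1 * (\<delta> * \<alpha> + 1) = -1" using a1 nu by algebra
    then have "\<delta> * \<alpha> + 1 \<noteq> 0" by auto
    have "\<delta> * \<alpha> + 2 = 0" using q \<open>\<delta> * \<alpha> + 1 \<noteq> 0\<close> by simp
    then have da: "\<delta> * \<alpha> = -2" by algebra
    have "- 1 - (\<delta> * \<alpha>) * (g * \<alpha>) - \<delta> * \<alpha> - g * \<alpha> = 0"
      using h3 nu aa by algebra
    with da have "1 + g * \<alpha> = 0" by algebra
    with g01 da show False by auto
  qed
qed

lemma finalB:
  fixes M D :: "nat \<Rightarrow> nat \<Rightarrow> nat \<Rightarrow> 'k::field_char_0" and U C :: "nat \<Rightarrow> 'k" and S :: "nat \<Rightarrow> nat \<Rightarrow> 'k"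
  assumes H: "hopf_superalgebra_sc 3 dg M U D C S"
    and dg: "dg 0 = 0" "dg 1 = 0" "dg 2 = 1"
    and U: "U 0 = 1" "U 1 = 0" "U 2 = 0"
    and C: "C 0 = 1" "C 1 = 0" "C 2 = 0"
  shows False
proof -
  have gm: "\<And>a b r. a < 3 \<Longrightarrow> b < 3 \<Longrightarrow> r < 3 \<Longrightarrow> dg r \<noteq> (dg a + dg b) mod 2 \<Longrightarrow> M a b r = 0"
    using hp_gm[OF H] by blast
  have gd: "\<And>a b r. a < 3 \<Longrightarrow> b < 3 \<Longrightarrow> r < 3 \<Longrightarrow> dg a \<noteq> (dg b + dg r) mod 2 \<Longrightarrow> D a b r = 0"
    using hp_gd[OF H] by blast
  have unitL: "\<And>j k. j < 3 \<Longrightarrow> k < 3 \<Longrightarrow> (\<Sum>l<3. U l * M l j k) = (if j = k then 1 else 0)"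
    using H by (rule hp_unitL)
  have unitR: "\<And>j k. j < 3 \<Longrightarrow> k < 3 \<Longrightarrow> (\<Sum>l<3. U l * M j l k) = (if j = k then 1 else 0)"
    using H by (rule hp_unitR)
  have counitL: "\<And>i k. i < 3 \<Longrightarrow> k < 3 \<Longrightarrow> (\<Sum>j<3. D i j k * C j) = (if i = k then 1 else 0)"
    using H by (rule hp_counitL)
  have counitR: "\<And>i j. i < 3 \<Longrightarrow> j < 3 \<Longrightarrow> (\<Sum>k<3. D i j k * C k) = (if i = j then 1 else 0)"
    using H by (rule hp_counitR)
  have dhom: "\<And>i j a b. i < 3 \<Longrightarrow> j < 3 \<Longrightarrow> a < 3 \<Longrightarrow> b < 3 \<Longrightarrow>
        (\<Sum>k<3. M i j k * D k a b) =
        (\<Sum>p<3. \<Sum>q<3. \<Sum>r<3. \<Sum>t<3.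
            (-1) ^ (dg q * dg r) * D i p q * D j r t * M p r a * M q t b)"
    using H by (rule hp_dhom)
  have dunit: "\<And>a b. a < 3 \<Longrightarrow> b < 3 \<Longrightarrow> (\<Sum>k<3. U k * D k a b) = U a * U b"
    using H by (rule hp_dunit)
  have ehom: "\<And>i j. i < 3 \<Longrightarrow> j < 3 \<Longrightarrow> (\<Sum>k<3. M i j k * C k) = C i * C j"
    using H by (rule hp_ehom)
  note gz = gm[of 0 0 1] gm[of 0 0 2] gm[of 0 1 0] gm[of 0 2 0] gm[of 1 0 0] gm[of 2 0 0]
     gm[of 1 1 1] gm[of 1 1 2] gm[of 1 2 1] gm[of 1 2 2] gm[of 2 1 1] gm[of 2 1 2] gm[of 2 2 1] gm[of 2 2 2]
     gm[of 0 1 1] gm[of 0 1 2] gm[of 0 2 1] gm[of 0 2 2] gm[of 1 0 1] gm[of 1 0 2] gm[of 2 0 1] gm[of 2 0 2]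
     gm[of 1 1 0] gm[of 1 2 0] gm[of 2 1 0] gm[of 2 2 0] gm[of 0 0 0]
  note dz = gd[of 0 0 1] gd[of 0 0 2] gd[of 0 1 0] gd[of 0 2 0] gd[of 1 0 0] gd[of 2 0 0]
     gd[of 1 1 1] gd[of 1 1 2] gd[of 1 2 1] gd[of 1 2 2] gd[of 2 1 1] gd[of 2 1 2] gd[of 2 2 1] gd[of 2 2 2]
     gd[of 0 1 1] gd[of 0 1 2] gd[of 0 2 1] gd[of 0 2 2] gd[of 1 0 1] gd[of 1 0 2] gd[of 2 0 1] gd[of 2 0 2]
     gd[of 1 1 0] gd[of 1 2 0] gd[of 2 1 0] gd[of 2 2 0] gd[of 0 0 0]
  have gs: "\<And>a b. a < 3 \<Longrightarrow> b < 3 \<Longrightarrow> dg a \<noteq> dg b \<Longrightarrow> S a b = 0"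
    using hp_gs[OF H] by blast
  have assoc: "\<And>i j k r. i < 3 \<Longrightarrow> j < 3 \<Longrightarrow> k < 3 \<Longrightarrow> r < 3 \<Longrightarrow>
        (\<Sum>l<3. M i j l * M l k r) = (\<Sum>l<3. M j k l * M i l r)"
    using H by (rule hp_assoc)
  have coassoc: "\<And>i a b r. i < 3 \<Longrightarrow> a < 3 \<Longrightarrow> b < 3 \<Longrightarrow> r < 3 \<Longrightarrow>
        (\<Sum>l<3. D i l r * D l a b) = (\<Sum>l<3. D i a l * D l b r)"
    using H by (rule hp_coassoc)
  have antL: "\<And>i k. i < 3 \<Longrightarrow> k < 3 \<Longrightarrow> (\<Sum>p<3. \<Sum>q<3. \<Sum>r<3. D i p q * S p r * M r q k) = C i * U k"
    using H by (rule hp_antL)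
  note sz = gs[of 0 2] gs[of 1 2] gs[of 2 0] gs[of 2 1]
  have Z: "M 0 0 0 = 1" "M 0 0 1 = 0" "M 0 1 0 = 0" "M 1 0 0 = 0" "M 0 1 1 = 1" "M 1 0 1 = 1"
     "M 0 2 2 = 1" "M 2 0 2 = 1" "M 1 1 0 = 0" "M 2 2 0 = 0"
    using unitL[of 0 0] unitL[of 0 1] unitL[of 1 0] unitR[of 1 0] unitL[of 1 1] unitR[of 1 1]
      unitL[of 2 2] unitR[of 2 2] ehom[of 1 1] ehom[of 2 2]
      U C dg gz by (simp_all add: sum3)
  have Z2: "D 0 0 0 = 1" "D 0 0 1 = 0" "D 0 1 0 = 0" "D 1 0 0 = 0" "D 0 1 1 = 0" "D 1 0 1 = 1"
     "D 1 1 0 = 1" "D 2 0 2 = 1" "D 2 2 0 = 1" "D 0 2 2 = 0"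
    using counitL[of 0 0] counitL[of 0 1] counitR[of 0 1] counitL[of 1 0] dunit[of 1 1] counitL[of 1 1]
      counitR[of 1 1] counitL[of 2 2] counitR[of 2 2] dunit[of 2 2]
      U C dg dz by (simp_all add: sum3)
  have Z3: "S 0 0 = 1" "S 0 1 = 0" "S 1 0 = 0"
    using antL[of 0 0] antL[of 0 1] antL[of 1 0] U C dg gz dz sz Z Z2 by (simp_all add: sum3)
  define \<alpha> where "\<alpha> = M 1 1 1"
  define a where "a = M 1 2 2"
  define b where "b = M 2 1 2"
  define \<gamma> where "\<gamma> = M 2 2 1"
  define \<delta> where "\<delta> = D 1 1 1"
  define \<nu> where "\<nu> = D 1 2 2"
  define g where "g = D 2 1 2"
  define h where "h = D 2 2 1"
  define s1 where "s1 = S 1 1"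
  define \<sigma> where "\<sigma> = S 2 2"
  have e1: "\<alpha> * a = a * a"
    using assoc[of 1 1 2 2] dg gz Z unfolding \<alpha>_def a_def by (simp add: sum3)
  have e2: "a * \<gamma> = \<alpha> * \<gamma>"
    using assoc[of 1 2 2 1] dg gz Z unfolding \<alpha>_def a_def \<gamma>_def by (simp add: sum3)
  have e4: "b * \<gamma> = a * \<gamma>"
    using assoc[of 2 1 2 1] dg gz Z unfolding b_def a_def \<gamma>_def by (simp add: sum3)
  have f4: "\<delta> * g = g * g"
    using coassoc[of 2 1 1 2] dg dz Z2 unfolding \<delta>_def g_def by (simp add: sum3)
  have h1: "3 * (\<delta> * \<alpha>) + (2 + (\<delta> * \<delta> * \<alpha> * \<alpha> - \<nu> * \<nu> * \<gamma> * \<gamma>)) = 0"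
    using dhom[of 1 1 1 1] dg gz dz Z Z2 unfolding \<alpha>_def \<gamma>_def \<delta>_def \<nu>_def by (simp add: sum3)
  have h3: "- 1 - \<delta> * g * \<alpha> * a - \<delta> * a + \<nu> * h * b * \<gamma> + \<nu> * \<gamma> - g * \<alpha> = 0"
    using dhom[of 1 2 1 2] dg gz dz Z Z2 unfolding \<alpha>_def a_def b_def \<gamma>_def \<delta>_def \<nu>_def g_def h_def
    apply (simp add: sum3)
    apply (thin_tac "dg _ = _")+
    apply (thin_tac "M _ _ _ = _")+
    apply (thin_tac "D _ _ _ = _")+
    by algebra
  have h8: "\<nu> * \<gamma> + g * a - g * b - h * a + h * b = 0"
    using dhom[of 2 2 2 2] dg gz dz Z Z2 unfolding a_def b_def \<gamma>_def \<nu>_def g_def h_def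
    apply (simp add: sum3)
    apply (thin_tac "dg _ = _")+
    apply (thin_tac "M _ _ _ = _")+
    apply (thin_tac "D _ _ _ = _")+
    by algebra
  have a1: "\<delta> * \<alpha> * s1 + \<nu> * \<gamma> * \<sigma> + 1 + s1 = 0"
    using antL[of 1 1] dg gz dz sz Z Z2 Z3 U C unfolding \<alpha>_def \<gamma>_def \<delta>_def \<nu>_def s1_def \<sigma>_def
    apply (simp add: sum3)
    apply (thin_tac "dg _ = _")+
    apply (thin_tac "M _ _ _ = _")+
    apply (thin_tac "D _ _ _ = _")+
    apply (thin_tac "S _ _ = _")+
    apply (thin_tac "U _ = _")+
    apply (thin_tac "C _ = _")+
    by algebra
  show False using alg[OF e1 e2 e4 f4 h1 h3 h8 a1] .
qed



lemma sum3d: assumes "i < 3" "j < 3" "k < 3" "i \<noteq> j" "i \<noteq> k" "j \<noteq> k"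
  shows "(\<Sum>l<3::nat. f l) = f i + f j + (f k :: 'a::comm_monoid_add)"
proof -
  have "{..<3::nat} = {i, j, k}" using assms by auto
  then show ?thesis using assms by (simp add: add_ac)
qed

lemma lt3: "(a::nat) < 3 \<Longrightarrow> a = 0 \<or> a = 1 \<or> a = 2" by auto

lemma caseA:
  fixes deg :: "nat \<Rightarrow> nat" and m d :: "nat \<Rightarrow> nat \<Rightarrow> nat \<Rightarrow> 'k::field_char_0"
    and u c :: "nat \<Rightarrow> 'k" and s :: "nat \<Rightarrow> nat \<Rightarrow> 'k"
  assumes H: "hopf_superalgebra_sc 3 deg m u d c s"
    and ijk: "i < 3" "j < 3" "k < 3" "i \<noteq> j" "i \<noteq> k" "j \<noteq> k"
    and dgs: "deg i = 0" "deg j = 1" "deg k = 1"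
  shows False
proof -
  note S3 = sum3d[OF ijk]
  have uj: "u j = 0" using hp_gu[OF H, of j] ijk dgs by auto
  have uk: "u k = 0" using hp_gu[OF H, of k] ijk dgs by auto
  have cj: "c j = 0" using hp_gc[OF H, of j] ijk dgs by auto
  have ck: "c k = 0" using hp_gc[OF H, of k] ijk dgs by auto
  have uc: "u i * c i = 1" using hp_eu[OF H] uj uk by (simp add: S3)
  define P where "P a p = (if a = 0 then u p else if a = 1 then (if p = j then 1 else 0) else (if p = k then 1 else 0))" for a p :: nat
  define Q where "Q p a = (if a = 0 then c p else if a = 1 then (if p = j then 1 else 0) else (if p = k then 1 else 0))" for p a :: nat
  define dg' where "dg' (a::nat) = (if a = 0 then 0 else 1::nat)" for a
  have ijk': "i \<noteq> j" "i \<noteq> k" "j \<noteq> k" "j \<noteq> i" "k \<noteq> i" "k \<noteq> j" using ijk by auto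
  interpret X: cb 3 deg dg' m d u c s P Q
  proof
    show "hopf_superalgebra_sc 3 deg m u d c s" by (rule H)
  next
    fix a b :: nat assume "a < 3" "b < 3"
    then show "(\<Sum>l<3. P a l * Q l b) = (if a = b then 1 else 0)"
      using lt3[of a] lt3[of b] uj uk cj ck uc ijk' by (auto simp: S3 P_def Q_def)
  next
    fix a b :: nat assume "a < 3" "b < 3"
    then have "a = i \<or> a = j \<or> a = k" "b = i \<or> b = j \<or> b = k" using ijk by auto
    then show "(\<Sum>l<3. Q a l * P l b) = (if a = b then 1 else 0)"
      using uj uk cj ck uc ijk' by (auto simp: sum3 P_def Q_def mult.commute)
  next
    fix a p :: nat assume "a < 3" "p < 3" "P a p \<noteq> 0"
    then show "dg' a = deg p"
      using lt3[of a] hp_gu[OF H, of p] dgs by (auto simp: P_def dg'_def split: if_splits)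
  next
    fix p a :: nat assume "p < 3" "a < 3" "Q p a \<noteq> 0"
    then show "dg' a = deg p"
      using lt3[of a] hp_gc[OF H, of p] dgs by (auto simp: Q_def dg'_def split: if_splits)
  next
    fix a :: nat show "dg' a < 2" by (simp add: dg'_def)
  qed
  have U: "X.nU 0 = 1" "X.nU 1 = 0" "X.nU 2 = 0"
    using uj uk uc ijk' by (simp_all add: X.nU_def X.crd_def S3 Q_def mult.commute)
  have C: "X.nC 0 = 1" "X.nC 1 = 0" "X.nC 2 = 0"
    using uj uk cj ck uc ijk' by (simp_all add: X.nC_def X.eps_def S3 P_def)
  show False
    by (rule finalA[OF X.cb_hopf _ _ _ U C]) (simp_all add: dg'_def)
qed

lemma caseB:
  fixes deg :: "nat \<Rightarrow> nat" and m d :: "nat \<Rightarrow> nat \<Rightarrow> nat \<Rightarrow> 'k::field_char_0"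
    and u c :: "nat \<Rightarrow> 'k" and s :: "nat \<Rightarrow> nat \<Rightarrow> 'k"
  assumes H: "hopf_superalgebra_sc 3 deg m u d c s"
    and ijk: "i < 3" "j < 3" "k < 3" "i \<noteq> j" "i \<noteq> k" "j \<noteq> k"
    and dgs: "deg i = 0" "deg j = 0" "deg k = 1"
  shows False
proof -
  note S3 = sum3d[OF ijk]
  have uk: "u k = 0" using hp_gu[OF H, of k] ijk dgs by auto
  have ck: "c k = 0" using hp_gc[OF H, of k] ijk dgs by auto
  have uc: "u i * c i + u j * c j = 1" using hp_eu[OF H] uk by (simp add: S3)
  define P where "P a p = (if a = 0 then u p else if a = 1 then (if p = i then c j else if p = j then - c i else 0)
      else (if p = k then 1 else 0))" for a p :: nat
  define Q where "Q p a = (if a = 0 then c p else if a = 1 then (if p = i then u j else if p = j then - u i else 0)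
      else (if p = k then 1 else 0))" for p a :: nat
  define dg' where "dg' (a::nat) = (if a = 2 then 1 else 0::nat)" for a
  have ijk': "i \<noteq> j" "i \<noteq> k" "j \<noteq> k" "j \<noteq> i" "k \<noteq> i" "k \<noteq> j" using ijk by auto
  have uc2: "c i * u i + c j * u j = 1" "u i * c i + c j * u j = 1" "c i * u i + u j * c j = 1" "c j * u j + c i * u i = 1"
    using uc by (simp_all add: mult.commute add.commute)
  interpret X: cb 3 deg dg' m d u c s P Q
  proof
    show "hopf_superalgebra_sc 3 deg m u d c s" by (rule H)
  next
    fix a b :: nat assume "a < 3" "b < 3"
    then show "(\<Sum>l<3. P a l * Q l b) = (if a = b then 1 else 0)"
      using lt3[of a] lt3[of b] uk ck uc uc2 ijk' by (auto simp: S3 P_def Q_def mult.commute)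
  next
    fix a b :: nat assume "a < 3" "b < 3"
    then have "a = i \<or> a = j \<or> a = k" "b = i \<or> b = j \<or> b = k" using ijk by auto
    then show "(\<Sum>l<3. Q a l * P l b) = (if a = b then 1 else 0)"
      using uk ck uc uc2 ijk' by (auto simp: sum3 P_def Q_def mult.commute)
  next
    fix a p :: nat assume "a < 3" "p < 3" "P a p \<noteq> 0"
    then show "dg' a = deg p"
      using lt3[of a] hp_gu[OF H, of p] dgs by (auto simp: P_def dg'_def split: if_splits)
  next
    fix p a :: nat assume "p < 3" "a < 3" "Q p a \<noteq> 0"
    then show "dg' a = deg p"
      using lt3[of a] hp_gc[OF H, of p] dgs by (auto simp: Q_def dg'_def split: if_splits)
  next
    fix a :: nat show "dg' a < 2" by (simp add: dg'_def)
  qed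
  have U: "X.nU 0 = 1" "X.nU 1 = 0" "X.nU 2 = 0"
    using uk uc uc2 ijk' by (simp_all add: X.nU_def X.crd_def S3 Q_def mult.commute)
  have C: "X.nC 0 = 1" "X.nC 1 = 0" "X.nC 2 = 0"
    using uk ck uc uc2 ijk' by (simp_all add: X.nC_def X.eps_def S3 P_def mult.commute)
  show False
    by (rule finalB[OF X.cb_hopf _ _ _ U C]) (simp_all add: dg'_def)
qed


theorem theorem3p6:
  fixes deg :: "nat \<Rightarrow> nat"
    and m d :: "nat \<Rightarrow> nat \<Rightarrow> nat \<Rightarrow> 'k::field_char_0"
    and u c :: "nat \<Rightarrow> 'k"
    and s :: "nat \<Rightarrow> nat \<Rightarrow> 'k"
  assumes "alg_closed_field TYPE('k)"
    and "hopf_superalgebra_sc 3 deg m u d c s"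
  shows "\<not> (\<exists>i<3. deg i = 1)"
proof
  assume ex: "\<exists>i<3. deg i = 1"
  note H = assms(2)
  have d0: "deg 0 = 0 \<or> deg 0 = 1" using hp_deg[OF H, of 0] by auto
  have d1: "deg 1 = 0 \<or> deg 1 = 1" using hp_deg[OF H, of 1] by auto
  have d2: "deg 2 = 0 \<or> deg 2 = 1" using hp_deg[OF H, of 2] by auto
  show False
  proof (cases "deg 0 = 0")
    case a0: True
    show False
    proof (cases "deg 1 = 0")
      case a1: True
      show False
      proof (cases "deg 2 = 0")
        case True
        then show False using ex a0 a1 lt3 by force
      next
        case False
        then show False using caseB[OF H, of 0 1 2] a0 a1 d2 by simp
      qed
    next
      case a1: False
      show False
      proof (cases "deg 2 = 0")
        case True
        then show False using caseB[OF H, of 0 2 1] a0 a1 d1 by simp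
      next
        case False
        then show False using caseA[OF H, of 0 1 2] a0 a1 d1 d2 by simp
      qed
    qed
  next
    case a0: False
    show False
    proof (cases "deg 1 = 0")
      case a1: True
      show False
      proof (cases "deg 2 = 0")
        case True
        then show False using caseB[OF H, of 1 2 0] a0 a1 d0 by simp
      next
        case False
        then show False using caseA[OF H, of 1 0 2] a0 a1 d0 d2 by simp
      qed
    next
      case a1: False
      show False
      proof (cases "deg 2 = 0")
        case True
        then show False using caseA[OF H, of 2 0 1] a0 a1 d0 d1 by simp
      next
        case False
        have "u 0 = 0" "u 1 = 0" "u 2 = 0"
          using hp_gu[OF H, of 0] hp_gu[OF H, of 1] hp_gu[OF H, of 2] a0 a1 False by auto
        then show False using hp_eu[OF H] by (simp add: sum3)
      qed
    qed
  qed
qed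

end
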